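(* The map $f$ defined below restricts to a bijection from $\mathcal{G}_1$ onto $\mathcal{A}_1$, and $f(\pi)$ is a partition of the same integer as $\pi$.
   Context: Partitions are nonincreasing finite sequences of positive integers; $m_j(\pi)$ is the multiplicity of $j$ in $\pi$, $\ell(\pi)$ the number of parts, and $\pi\cup\lambda$ the partition formed by all parts of both (as a multiset). $\langle a^{m}\rangle$ denotes the partition consisting of $m$ copies of $a$. $\mathcal{G}_2$ is the set of partitions $\pi$ with $m_1(\pi)\le 1$ and $m_j(\pi)+m_{j+1}(\pi)\le 2$ for all $j\ge1$. $\mathcal{G}_1$ is the set of partitions $\pi$ with $m_1(\pi)=0$ and $m_j(\pi)+m_{j+1}(\pi)\le 2$ for all $j\ge1$ (so $\mathcal G_1\subset\mathcal G_2$). For $\pi\in\mathcal{G}_2$ every part has multiplicity at most $2$. Let $D(\pi)$ be the number of distinct parts of multiplicity $2$, let $R_1(\pi)>R_2(\pi)>\dots>R_{D(\pi)}(\pi)$ be these parts, and set $R_{D(\pi)+1}(\pi)=0$, $R_0(\pi)=\infty$. For $0\le k\le D(\pi)$ let $\pi^{(k)}$ be the partition consisting of the parts of $\pi$ strictly between $R_{k+1}(\pi)$ and $R_k(\pi)$ (these parts are distinct). For a partition $\mu$ and integer $c$, $\mu+\langle c^{\ell(\mu)}\rangle$ denotes $\mu$ with $c$ added to each part. Define $$f(\pi)=\bigcup_{i=1}^{D(\pi)}\big\langle (2i)^{R_i(\pi)-R_{i+1}(\pi)-\ell(\pi^{(i)})}\big\rangle\ \cup\ \bigcup_{i=0}^{D(\pi)}\Big(\pi^{(i)}+\langle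 (2i)^{\ell(\pi^{(i)})}\rangle\Big).$$ For a partition $\lambda$, $R_1(\lambda)$ is its largest part of multiplicity $\ge2$ (or $0$ if none). $\mathcal{A}_1$ is the set of partitions $\lambda$ such that $m_j(\lambda)\le1$ for odd $j$, $m_j(\lambda)=0$ for odd $j<R_1(\lambda)+2$, and $m_j(\lambda)\ge 2$ for even $j$ with $0<j<R_1(\lambda)$. *)

theory Defs
  imports Main "HOL-Library.Multiset"
begin

text \<open>Partitions are represented as finite multisets of positive naturals.
  The multiplicity m_j(pi) is count pi j, the number of parts is size pi,
  the union of partitions is multiset sum (+), the integer partitioned is
  sum_mset pi, and the partition with m copies of a is replicate_mset m a.\<close>

definition is_partition :: "nat multiset \<Rightarrow> bool" where
  "is_partition p \<longleftrightarrow> 0 \<notin># p"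

definition G2 :: "nat multiset set" where
  "G2 = {p. is_partition p \<and> count p 1 \<le> 1 \<and>
              (\<forall>j\<ge>1. count p j + count p (j+1) \<le> 2)}"

definition G1 :: "nat multiset set" where
  "G1 = {p. is_partition p \<and> count p 1 = 0 \<and>
              (\<forall>j\<ge>1. count p j + count p (j+1) \<le> 2)}"

definition doubled :: "nat multiset \<Rightarrow> nat set" where
  "doubled p = {j. j \<in># p \<and> count p j = 2}"

definition D :: "nat multiset \<Rightarrow> nat" where
  "D p = card (doubled p)"

text \<open>R p i for 1 \<le> i \<le> D p is the i-th largest part of multiplicity 2;
  R p (D p + 1) = 0 (and R p i = 0 for all i > D p).
  The convention R_0 = infinity is handled in block below.\<close>
definition R :: "nat multiset \<Rightarrow> nat \<Rightarrow> nat" where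
  "R p i = (if 1 \<le> i \<and> i \<le> D p
            then rev (sorted_list_of_set (doubled p)) ! (i - 1) else 0)"

definition block :: "nat multiset \<Rightarrow> nat \<Rightarrow> nat multiset" where
  "block p k = filter_mset (\<lambda>x. R p (k+1) < x \<and> (k = 0 \<or> x < R p k)) p"

definition f :: "nat multiset \<Rightarrow> nat multiset" where
  "f p = (\<Sum>i\<in>{1..D p}. replicate_mset (R p i - R p (i+1) - size (block p i)) (2*i))
       + (\<Sum>i\<in>{0..D p}. image_mset (\<lambda>x. x + 2*i) (block p i))"

definition R1 :: "nat multiset \<Rightarrow> nat" where
  "R1 l = (if {j. count l j \<ge> 2} = {} then 0 else Max {j. count l j \<ge> 2})"

definition A1 :: "nat multiset set" where
  "A1 = {l. is_partition l \<and>
            (\<forall>j. odd j \<longrightarrow> count l j \<le> 1) \<and>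
            (\<forall>j. odd j \<and> j < R1 l + 2 \<longrightarrow> count l j = 0) \<and>
            (\<forall>j. even j \<and> 0 < j \<and> j < R1 l \<longrightarrow> count l j \<ge> 2)}"

end

theory Submission
  imports Defs
begin


lemma sl_max:
  assumes "finite S" "S \<noteq> {}"
  shows "sorted_list_of_set S = sorted_list_of_set (S - {Max S}) @ [Max S]"
  by (rule sorted_distinct_set_unique) (use assms in \<open>auto simp: sorted_append intro: Max_in\<close>)

lemma G1D:
  assumes "p \<in> G1"
  shows "count p 0 = 0" "count p 1 = 0" "\<And>j. count p j \<le> 2"
    "\<And>j. j \<ge> 1 \<Longrightarrow> count p j + count p (j+1) \<le> 2"
proof -
  show "count p 0 = 0" using assms unfolding G1_def is_partition_def by (simp add: count_eq_zero_iff)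
  show "count p 1 = 0" using assms unfolding G1_def by simp
  show "\<And>j. j \<ge> 1 \<Longrightarrow> count p j + count p (j+1) \<le> 2" using assms unfolding G1_def by simp
  fix j show "count p j \<le> 2"
  proof (cases "j = 0")
    case True then show ?thesis using \<open>count p 0 = 0\<close> by simp
  next
    case False
    then have "count p j + count p (j+1) \<le> 2" using assms unfolding G1_def by simp
    then show ?thesis by simp
  qed
qed

lemma doubled_eq: "doubled p = {j. count p j = 2}"
  unfolding doubled_def by (auto intro: count_greater_zero_iff[THEN iffD1])

lemma doubled_finite: "finite (doubled p)"
  unfolding doubled_def by (rule finite_subset[of _ "set_mset p"]) auto

lemma R_mem:
  assumes "1 \<le> i" "i \<le> D p"
  shows "R p i \<in> doubled p"
proof -
  have "R p i = rev (sorted_list_of_set (doubled p)) ! (i - 1)" using assms by (simp add: R_def)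
  moreover have "i - 1 < length (rev (sorted_list_of_set (doubled p)))"
    using assms by (simp add: D_def)
  ultimately show ?thesis
    by (metis doubled_finite nth_mem set_rev set_sorted_list_of_set)
qed

lemma R_zero: "i = 0 \<or> i > D p \<Longrightarrow> R p i = 0"
  by (auto simp: R_def)

lemma R1_max:
  assumes "D p \<ge> 1"
  shows "R p 1 = Max (doubled p)"
proof -
  have ne: "doubled p \<noteq> {}" using assms by (auto simp: D_def)
  have "R p 1 = rev (sorted_list_of_set (doubled p)) ! 0" using assms by (simp add: R_def)
  also have "\<dots> = Max (doubled p)"
    using sl_max[OF doubled_finite ne] by simp
  finally show ?thesis .
qed


lemma image_mset_sum: "image_mset g (\<Sum>i\<in>A. F i) = (\<Sum>i\<in>A. image_mset g (F i))"
  by (induct A rule: infinite_finite_induct) (auto simp: image_mset_union)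

lemma count_shift: "count (image_mset (\<lambda>x. x + k) M) (j::nat) = (if k \<le> j then count M (j - k) else 0)"
proof (induct M)
  case (add x M) then show ?case by (cases "x + k = j") auto
qed simp

lemma sum_shift2: "sum_mset (image_mset (\<lambda>x. x + 2) M::nat multiset) = sum_mset M + 2 * size M"
  by (induct M) auto

lemma size_le1: assumes "\<And>x. count M x \<le> 1" shows "size M = card (set_mset M)"
proof -
  have "M = mset_set (set_mset M)"
  proof (rule multiset_eqI)
    fix x show "count M x = count (mset_set (set_mset M)) x"
    proof (cases "x \<in># M")
      case True
      then have "count M x > 0" by simp
      then have c: "count M x = 1" using assms[of x] by linarith
      show ?thesis using True by (simp only: c count_mset_set' finite_set_mset) simp
    qed (simp add: count_mset_set' not_in_iff)
  qed
  then show ?thesis by (metis size_mset_set)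
qed

locale split =
  fixes p :: "nat multiset"
  assumes G: "p \<in> G1" and Dp: "D p \<ge> 1"
begin

abbreviation "t \<equiv> R p 1"
abbreviation "q \<equiv> filter_mset (\<lambda>x. x < t) p"

lemma t_dbl: "t \<in> doubled p" using R_mem[of 1 p] Dp by simp
lemma cnt_t: "count p t = 2" using t_dbl by (simp add: doubled_eq)
lemma t_ge2: "t \<ge> 2"
proof -
  have "t \<noteq> 0" by (rule notI) (use cnt_t G1D(1)[OF G] in simp)
  moreover have "t \<noteq> 1" by (rule notI) (use cnt_t G1D(2)[OF G] in simp)
  ultimately show ?thesis by simp
qed
lemma cnt_tm1: "count p (t - 1) = 0"
  using G1D(4)[OF G, of "t - 1"] t_ge2 cnt_t by simp
lemma cnt_tp1: "count p (t + 1) = 0"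
  using G1D(4)[OF G, of "t"] t_ge2 cnt_t by simp
lemma dbl_le: "x \<in> doubled p \<Longrightarrow> x \<le> t"
  using R1_max[OF Dp] doubled_finite by simp

lemma cnt_q: "count q x = (if x < t then count p x else 0)" by simp

lemma dbl_q: "doubled q = doubled p - {t}"
  using dbl_le by (auto simp: doubled_eq split: if_splits intro: le_neq_implies_less)

lemma q_G1: "q \<in> G1"
  using G G1D(3)[OF G] unfolding G1_def is_partition_def by auto

lemma D_q: "D q = D p - 1"
  unfolding D_def dbl_q using t_dbl doubled_finite by simp

lemma sl_p: "rev (sorted_list_of_set (doubled p)) = t # rev (sorted_list_of_set (doubled q))"
proof -
  have ne: "doubled p \<noteq> {}" using t_dbl by auto
  show ?thesis using sl_max[OF doubled_finite ne] R1_max[OF Dp] dbl_q by simp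
qed

lemma R_q: assumes i: "i \<ge> 1" shows "R q i = R p (Suc i)"
proof (cases "i \<le> D q")
  case True
  then have "R q i = rev (sorted_list_of_set (doubled q)) ! (i - 1)" using i by (simp add: R_def)
  moreover have "Suc i \<le> D p" using True D_q Dp by linarith
  then have "R p (Suc i) = rev (sorted_list_of_set (doubled p)) ! i" unfolding R_def by simp
  ultimately show ?thesis using sl_p i by (simp add: nth_Cons')
next
  case False
  then have "\<not> Suc i \<le> D p" using D_q Dp by linarith
  then have "R p (Suc i) = 0" unfolding R_def by simp
  moreover have "R q i = 0" using False unfolding R_def by simp
  ultimately show ?thesis by simp
qed

lemma block_q: "block q i = block p (Suc i)"
proof (cases "i = 0")
  case True
  then show ?thesis using R_q[of 1] by (auto simp: block_def filter_filter_mset intro!: filter_mset_cong)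
next
  case False
  have "x < R p (Suc i) \<Longrightarrow> x < t" for x
  proof (cases "Suc i \<le> D p")
    case True
    then have "R p (Suc i) \<in> doubled p" using R_mem by simp
    then show "x < R p (Suc i) \<Longrightarrow> x < t" using dbl_le by force
  qed (simp add: R_def)
  then show ?thesis using False R_q[of i] R_q[of "Suc i"]
    by (auto simp: block_def filter_filter_mset intro!: filter_mset_cong)
qed

lemma block_p0: "block p 0 = filter_mset (\<lambda>x. t < x) p"
  by (simp add: block_def)

lemma p_split: "p = filter_mset (\<lambda>x. t < x) p + replicate_mset 2 t + q"
  by (rule multiset_eqI) (use cnt_t in \<open>auto simp: numeral_2_eq_2\<close>)

lemma f_rec0: "f p = filter_mset (\<lambda>x. t < x) p + replicate_mset (t - R q 1 - size (block q 0)) 2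
                 + image_mset (\<lambda>x. x + 2) (f q)"
proof -
  define n where "n = D q"
  have Dpn: "D p = Suc n" using D_q Dp n_def by simp
  define Ap where "Ap = (\<lambda>i. replicate_mset (R p i - R p (i+1) - size (block p i)) (2*i))"
  define Aq where "Aq = (\<lambda>i. replicate_mset (R q i - R q (i+1) - size (block q i)) (2*i))"
  define Bp where "Bp = (\<lambda>i. image_mset (\<lambda>x. x + 2*i) (block p i))"
  define Bq where "Bq = (\<lambda>i. image_mset (\<lambda>x. x + 2*i) (block q i))"
  have fp: "f p = sum Ap {1..Suc n} + sum Bp {0..Suc n}" unfolding f_def Ap_def Bp_def Dpn ..
  have fq: "f q = sum Aq {1..n} + sum Bq {0..n}" unfolding f_def Aq_def Bq_def n_def ..
  have "sum Ap {1..Suc n} = Ap 1 + sum Ap {Suc 1..Suc n}" by (rule sum.atLeast_Suc_atMost) simp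
  also have "sum Ap {Suc 1..Suc n} = sum (\<lambda>i. Ap (Suc i)) {1..n}" by (rule sum.shift_bounds_cl_Suc_ivl)
  also have "sum (\<lambda>i. Ap (Suc i)) {1..n} = sum (\<lambda>i. image_mset (\<lambda>x. x + 2) (Aq i)) {1..n}"
  proof (rule sum.cong)
    fix i assume "i \<in> {1..n}"
    then have "i \<ge> 1" by simp
    then show "Ap (Suc i) = image_mset (\<lambda>x. x + 2) (Aq i)"
      unfolding Ap_def Aq_def using R_q[of i] R_q[of "Suc i"] block_q[of i] by simp
  qed simp
  also have "Ap 1 = replicate_mset (t - R q 1 - size (block q 0)) 2"
    unfolding Ap_def using R_q[of 1] block_q[of 0] by (simp add: numeral_2_eq_2)
  finally have A: "sum Ap {1..Suc n} = replicate_mset (t - R q 1 - size (block q 0)) 2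
      + image_mset (\<lambda>x. x + 2) (sum Aq {1..n})" by (simp add: image_mset_sum)
  have "sum Bp {0..Suc n} = Bp 0 + sum Bp {Suc 0..Suc n}" by (rule sum.atLeast_Suc_atMost) simp
  also have "sum Bp {Suc 0..Suc n} = sum (\<lambda>i. Bp (Suc i)) {0..n}" by (rule sum.shift_bounds_cl_Suc_ivl)
  also have "sum (\<lambda>i. Bp (Suc i)) {0..n} = sum (\<lambda>i. image_mset (\<lambda>x. x + 2) (Bq i)) {0..n}"
  proof (rule sum.cong)
    fix i
    show "Bp (Suc i) = image_mset (\<lambda>x. x + 2) (Bq i)"
      unfolding Bp_def Bq_def using block_q[of i] by (simp add: image_mset.compositionality o_def add_ac)
  qed simp
  also have "Bp 0 = filter_mset (\<lambda>x. t < x) p" unfolding Bp_def block_p0 by simp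
  finally have B: "sum Bp {0..Suc n} = filter_mset (\<lambda>x. t < x) p
      + image_mset (\<lambda>x. x + 2) (sum Bq {0..n})" by (simp add: image_mset_sum)
  show ?thesis unfolding fp fq A B by (simp add: image_mset_union add_ac)
qed

lemma gap: "R q 1 + size (block q 0) + 2 \<le> t"
proof -
  define r where "r = R q 1"
  have r_dbl: "r > 0 \<Longrightarrow> count q r = 2"
    using R_mem[of 1 q] unfolding r_def by (cases "1 \<le> D q") (auto simp: doubled_eq R_def)
  have qG: "q \<in> G1" by (rule q_G1)
  have r_lt: "r + 2 \<le> t"
  proof (cases "r > 0")
    case True
    then have "count q r = 2" by (rule r_dbl)
    then have "r < t" "count p r = 2" by (auto split: if_splits)
    moreover have "r \<noteq> t - 1" using cnt_tm1 \<open>count p r = 2\<close> by auto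
    ultimately show ?thesis by simp
  next
    case False then show ?thesis using t_ge2 by simp
  qed
  have bq: "block q 0 = filter_mset (\<lambda>x. r < x) q" unfolding block_def r_def by simp
  have sub: "set_mset (block q 0) \<subseteq> {r+2..t-2}"
  proof
    fix x assume "x \<in> set_mset (block q 0)"
    then have x: "x \<in># q" "r < x" using bq by auto
    then have "x < t" "count p x > 0" by (auto split: if_splits)
    moreover have "x \<noteq> t - 1"
    proof
      assume "x = t - 1" then show False using cnt_tm1 \<open>count p x > 0\<close> by simp
    qed
    moreover have "x \<noteq> r + 1"
    proof
      assume xr: "x = r + 1"
      show False
      proof (cases "r > 0")
        case True
        then have "count q r + count q (r+1) \<le> 2" using G1D(4)[OF qG, of r] by simp
        then show False using r_dbl[OF True] x xr by (simp add: not_in_iff[symmetric])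
      next
        case False then show False using xr x G1D(2)[OF qG] by (simp add: count_eq_zero_iff)
      qed
    qed
    ultimately show "x \<in> {r+2..t-2}" using x by auto
  qed
  have dist: "count (block q 0) x \<le> 1" for x
  proof (cases "x \<in># block q 0")
    case True
    then have x: "x \<in># q" "r < x" using bq by auto
    have "count q x \<le> 2" using G1D(3)[OF qG] by simp
    moreover have "count q x \<noteq> 2"
    proof
      assume "count q x = 2"
      then have "x \<in> doubled q" by (simp add: doubled_eq)
      then have "Suc 0 \<le> D q" unfolding D_def using doubled_finite card_0_eq by fastforce
      then have "x \<le> r" unfolding r_def using R1_max[of q] doubled_finite \<open>x \<in> doubled q\<close> by simp
      then show False using x by simp
    qed
    moreover have "count (block q 0) x = count q x" using x bq by simp
    ultimately show ?thesis by linarith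
  qed (simp add: not_in_iff)
  have "size (block q 0) = card (set_mset (block q 0))"
    using dist by (rule size_le1)
  also have "\<dots> \<le> card {r+2..t-2}" by (rule card_mono[OF _ sub]) simp
  finally have "size (block q 0) \<le> t - 2 + 1 - (r + 2)" by simp
  then show ?thesis using r_lt unfolding r_def by linarith
qed

end



lemma D0_f:
  assumes "p \<in> G1" "D p = 0"
  shows "f p = p" "R p 1 = 0" "block p 0 = p"
proof -
  show R0: "R p 1 = 0" using assms by (simp add: R_def)
  show b0: "block p 0 = p" unfolding block_def using R0 G1D(1)[OF assms(1)]
    by (auto intro!: multiset_eqI simp: not_less)
  show "f p = p" unfolding f_def using assms(2) b0 by simp
qed

lemma f_size: "p \<in> G1 \<Longrightarrow> size (f p) = R p 1 + size (block p 0)"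
proof (induct "D p" arbitrary: p)
  case 0
  then show ?case using D0_f by simp
next
  case (Suc n)
  interpret split p using Suc by unfold_locales auto
  have IH: "size (f q) = R q 1 + size (block q 0)" using Suc(1)[of q] D_q Suc(2) q_G1 by simp
  show ?case using f_rec0 IH gap block_p0 by simp
qed

lemma (in split) f_rec:
  "f p = filter_mset (\<lambda>x. t < x) p + replicate_mset (t - size (f q)) 2
                 + image_mset (\<lambda>x. x + 2) (f q)"
  using f_rec0 f_size[OF q_G1] by (simp add: add.assoc)

lemma (in split) size_fq: "size (f q) + 2 \<le> t"
  using f_size[OF q_G1] gap by simp

lemma R1_fin: "finite {j. count l j \<ge> 2}"
proof (rule finite_subset[of _ "set_mset l"])
  show "{j. count l j \<ge> 2} \<subseteq> set_mset l"
  proof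
    fix x assume "x \<in> {j. 2 \<le> count l j}"
    then have "2 \<le> count l x" by simp
    then have "count l x > 0" by linarith
    then show "x \<in># l" by (simp only: count_greater_zero_iff)
  qed
qed simp

lemma R1_ge: "count l j \<ge> 2 \<Longrightarrow> j \<le> R1 l"
  unfolding R1_def using R1_fin[of l] by (auto intro: Max_ge)

lemma R1_cnt: "R1 l > 0 \<Longrightarrow> count l (R1 l) \<ge> 2"
  unfolding R1_def using R1_fin[of l] Max_in[OF R1_fin[of l]] by (auto split: if_splits)

lemma R1_eqI: "count l r \<ge> 2 \<Longrightarrow> (\<And>j. count l j \<ge> 2 \<Longrightarrow> j \<le> r) \<Longrightarrow> R1 l = r"
  unfolding R1_def using R1_fin[of l] by (auto intro!: Max_eqI)

lemma R1_0: assumes h: "\<And>j. count l j \<le> 1" shows "R1 l = 0"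
proof -
  have "\<not> 2 \<le> count l j" for j using h[of j] by linarith
  then have "{j. count l j \<ge> 2} = {}" by simp
  then show ?thesis unfolding R1_def by simp
qed

lemma A1D:
  assumes "l \<in> A1"
  shows "count l 0 = 0" "count l 1 = 0" "\<And>j. odd j \<Longrightarrow> count l j \<le> 1"
    "\<And>j. odd j \<Longrightarrow> j < R1 l + 2 \<Longrightarrow> count l j = 0"
    "\<And>j. even j \<Longrightarrow> 0 < j \<Longrightarrow> j < R1 l \<Longrightarrow> count l j \<ge> 2"
  using assms unfolding A1_def is_partition_def by (auto simp: not_in_iff)


lemma A1_comp:
  fixes B \<mu> :: "nat multiset"
  assumes mu: "\<mu> \<in> A1" and m: "2 \<le> m" and yb: "\<forall>y\<in>#\<mu>. y + 2 \<le> t"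
    and xb: "\<forall>x\<in>#B. t + 2 \<le> x" and B1: "\<forall>x. count B x \<le> 1" and rt: "R1 \<mu> + 2 \<le> t"
  shows "B + replicate_mset m 2 + image_mset (\<lambda>x. x+2) \<mu> \<in> A1 \<and>
         R1 (B + replicate_mset m 2 + image_mset (\<lambda>x. x+2) \<mu>) = R1 \<mu> + 2"
proof -
  define l where "l = B + replicate_mset m 2 + image_mset (\<lambda>x. x+2) \<mu>"
  have cl: "count l j = count B j + (if j = 2 then m else 0) + (if 2 \<le> j then count \<mu> (j-2) else 0)" for j
    unfolding l_def count_union count_shift by simp
  have Bz: "j < t + 2 \<Longrightarrow> count B j = 0" for j using xb by (auto simp: not_in_iff[symmetric])
  have muz: "2 \<le> j \<Longrightarrow> t < j \<Longrightarrow> count \<mu> (j-2) = 0" for j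
  proof (rule ccontr)
    assume "2 \<le> j" "t < j" "count \<mu> (j - 2) \<noteq> 0"
    then have "j - 2 \<in># \<mu>" by (simp add: not_in_iff[symmetric])
    then show False using yb \<open>2 \<le> j\<close> \<open>t < j\<close> by force
  qed
  have mu0: "count \<mu> 0 = 0" "count \<mu> 1 = 0" using A1D[OF mu] by auto
  have t2: "2 \<le> t" using rt by simp
  have big: "t < j \<Longrightarrow> count l j \<le> 1" for j
    using cl[of j] muz[of j] B1 t2 by (auto split: if_splits)
  have small: "j \<le> t \<Longrightarrow> count l j = (if j = 2 then m else 0) + (if 2 \<le> j then count \<mu> (j-2) else 0)" for j
    using cl[of j] Bz[of j] by simp
  have l01: "count l 0 = 0" "count l 1 = 0" using small[of 0] small[of 1] t2 by auto
  have R1l: "R1 l = R1 \<mu> + 2"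
  proof (rule R1_eqI)
    show "count l (R1 \<mu> + 2) \<ge> 2"
    proof (cases "R1 \<mu> = 0")
      case True then show ?thesis using small[of 2] t2 m by (simp add: numeral_2_eq_2)
    next
      case False
      then have "count \<mu> (R1 \<mu>) \<ge> 2" using R1_cnt by simp
      then show ?thesis using small[of "R1 \<mu> + 2"] rt by simp
    qed
  next
    fix j assume j: "count l j \<ge> 2"
    then have "j \<le> t" using big[of j] by (meson le_trans not_le one_le_numeral numeral_le_one_iff semiring_norm(69))
    show "j \<le> R1 \<mu> + 2"
    proof (cases "j \<le> 2")
      case True then show ?thesis by simp
    next
      case False
      then have "count \<mu> (j-2) \<ge> 2" using small[of j] \<open>j \<le> t\<close> j by simp
      then have "j - 2 \<le> R1 \<mu>" by (rule R1_ge)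
      then show ?thesis by simp
    qed
  qed
  have "l \<in> A1"
    unfolding A1_def is_partition_def
  proof (intro CollectI conjI allI impI)
    show "0 \<notin># l" using l01 by (simp add: not_in_iff)
  next
    fix j :: nat assume "odd j"
    show "count l j \<le> 1"
    proof (cases "t < j")
      case True then show ?thesis using big by simp
    next
      case False
      have "count \<mu> (j - 2) \<le> 1" if "2 \<le> j"
        using A1D(3)[OF mu, of "j-2"] \<open>odd j\<close> that by simp
      then show ?thesis using small[of j] False \<open>odd j\<close> by auto
    qed
  next
    fix j :: nat assume "odd j \<and> j < R1 l + 2"
    then have j: "odd j" "j < R1 \<mu> + 4" using R1l by auto
    show "count l j = 0"
    proof (cases "j \<le> t")
      case True
      have "count \<mu> (j - 2) = 0" if "2 \<le> j"
        using A1D(4)[OF mu, of "j-2"] j that by simp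
      then show ?thesis using small[of j] True j by auto
    next
      case False
      then show ?thesis using cl[of j] Bz[of j] muz[of j] j rt t2 by auto
    qed
  next
    fix j :: nat assume "even j \<and> 0 < j \<and> j < R1 l"
    then have j: "even j" "0 < j" "j < R1 \<mu> + 2" using R1l by auto
    then have "j \<le> t" using rt by simp
    show "count l j \<ge> 2"
    proof (cases "j = 2")
      case True then show ?thesis using small[of 2] t2 m by simp
    next
      case False
      then have "j \<ge> 4" using j by presburger
      then have "count \<mu> (j - 2) \<ge> 2" using A1D(5)[OF mu, of "j-2"] j by simp
      then show ?thesis using small[of j] \<open>j \<le> t\<close> \<open>j \<ge> 4\<close> by simp
    qed
  qed
  then show ?thesis using R1l unfolding l_def by simp
qed


lemma cnt2_mem: "count M x \<ge> 2 \<Longrightarrow> x \<in># M"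
proof -
  assume "count M x \<ge> 2"
  then have "count M x > 0" by linarith
  then show ?thesis by (simp only: count_greater_zero_iff)
qed

lemma D0_empty: "D p = 0 \<Longrightarrow> doubled p = {}"
  using doubled_finite by (simp add: D_def)

lemma (in split) fq_facts:
  assumes IH: "\<forall>y\<in>#f q. \<exists>x\<in>#q. y \<le> x"
  shows "\<forall>y\<in>#f q. y + 2 \<le> t"
proof
  fix y assume "y \<in># f q"
  then obtain x where x: "x \<in># q" "y \<le> x" using IH by auto
  then have "x < t" "count p x > 0" by (auto split: if_splits)
  moreover have "x \<noteq> t - 1"
  proof
    assume "x = t - 1" then show False using cnt_tm1 \<open>count p x > 0\<close> by simp
  qed
  ultimately show "y + 2 \<le> t" using x by linarith
qed

lemma (in split) B_facts:
  shows "\<forall>x\<in>#filter_mset (\<lambda>x. t < x) p. t + 2 \<le> x"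
    "\<forall>x. count (filter_mset (\<lambda>x. t < x) p) x \<le> 1"
proof -
  show "\<forall>x\<in>#filter_mset (\<lambda>x. t < x) p. t + 2 \<le> x"
  proof
    fix x assume "x \<in># filter_mset (\<lambda>x. t < x) p"
    then have "t < x" "x \<in># p" by auto
    moreover have "x \<noteq> t + 1" using cnt_tp1 \<open>x \<in># p\<close> by (auto simp: not_in_iff[symmetric])
    ultimately show "t + 2 \<le> x" by simp
  qed
  show "\<forall>x. count (filter_mset (\<lambda>x. t < x) p) x \<le> 1"
  proof
    fix x
    show "count (filter_mset (\<lambda>x. t < x) p) x \<le> 1"
    proof (cases "t < x")
      case True
      have "count p x \<le> 2" using G1D(3)[OF G] by simp
      moreover have "count p x \<noteq> 2" using dbl_le[of x] True by (auto simp: doubled_eq)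
      ultimately show ?thesis using True by simp
    qed simp
  qed
qed

lemma main: "p \<in> G1 \<Longrightarrow> f p \<in> A1 \<and> R1 (f p) = 2 * D p \<and> sum_mset (f p) = sum_mset p
                 \<and> (\<forall>y\<in>#f p. \<exists>x\<in>#p. y \<le> x)"
proof (induct "D p" arbitrary: p)
  case 0
  have fp: "f p = p" using D0_f 0 by simp
  have c1: "count p j \<le> 1" for j
  proof -
    have "count p j \<le> 2" using G1D(3)[OF 0(2)] by simp
    moreover have "count p j \<noteq> 2" using D0_empty[of p] 0(1) by (auto simp: doubled_eq)
    ultimately show ?thesis by simp
  qed
  have R10: "R1 p = 0" using c1 by (rule R1_0)
  have oddlt: "\<And>j::nat. odd j \<Longrightarrow> j < Suc (Suc 0) \<Longrightarrow> j = Suc 0" by presburger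
  have "p \<in> A1" unfolding A1_def is_partition_def
    using c1 R10 G1D(1,2)[OF 0(2)] by (auto simp: not_in_iff dest!: oddlt)
  then show ?case using fp R10 0(1) by auto
next
  case (Suc n)
  interpret split p using Suc by unfold_locales auto
  have IH: "f q \<in> A1 \<and> R1 (f q) = 2 * D q \<and> sum_mset (f q) = sum_mset q
                 \<and> (\<forall>y\<in>#f q. \<exists>x\<in>#q. y \<le> x)" using Suc(1)[of q] D_q Suc(2) q_G1 by simp
  have yb: "\<forall>y\<in>#f q. y + 2 \<le> t" using fq_facts IH by simp
  have m: "2 \<le> t - size (f q)" using size_fq by simp
  have rt: "R1 (f q) + 2 \<le> t"
  proof (cases "R1 (f q) = 0")
    case True then show ?thesis using t_ge2 by simp
  next
    case False
    then have "count (f q) (R1 (f q)) \<ge> 2" using R1_cnt by simp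
    then have "R1 (f q) \<in># f q" by (rule cnt2_mem)
    then show ?thesis using yb by simp
  qed
  have comp: "f p \<in> A1 \<and> R1 (f p) = R1 (f q) + 2"
    unfolding f_rec using A1_comp[OF _ m yb B_facts rt] IH by simp
  have sum: "sum_mset (f p) = sum_mset p"
  proof -
    have "sum_mset (f p) = sum_mset (filter_mset (\<lambda>x. t < x) p) + (t - size (f q)) * 2 + (sum_mset (f q) + 2 * size (f q))"
      by (subst f_rec) (simp add: sum_shift2[simplified])
    also have "\<dots> = sum_mset (filter_mset (\<lambda>x. t < x) p) + 2 * t + sum_mset q"
      using size_fq IH by simp
    also have "\<dots> = sum_mset p" by (subst (2) p_split) simp
    finally show ?thesis .
  qed
  have bnd: "\<forall>y\<in>#f p. \<exists>x\<in>#p. y \<le> x"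
  proof
    fix y assume y: "y \<in># f p"
    have tp: "t \<in># p" using cnt_t by (intro cnt2_mem) simp
    from y consider "y \<in># filter_mset (\<lambda>x. t < x) p" | "y = 2" | "y \<in># image_mset (\<lambda>x. x + 2) (f q)"
      by (subst (asm) f_rec) (auto split: if_splits)
    then show "\<exists>x\<in>#p. y \<le> x"
    proof cases
      case 1 then show ?thesis by auto
    next
      case 2 then show ?thesis using tp t_ge2 by auto
    next
      case 3 then show ?thesis using tp yb by auto
    qed
  qed
  show ?case using comp sum bnd IH D_q Suc(2) by simp
qed


lemma cnt_decomp:
  fixes B \<mu> :: "nat multiset"
  assumes l: "l = B + replicate_mset m 2 + image_mset (\<lambda>x. x+2) \<mu>"
    and yb: "\<forall>y\<in>#\<mu>. y + 2 \<le> t"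
    and xb: "\<forall>x\<in>#B. t + 2 \<le> x" and B1: "\<forall>x. count B x \<le> 1" and t2: "2 \<le> t"
    and mt: "m + size \<mu> = t"
  shows "filter_mset (\<lambda>x. x \<le> t) l = replicate_mset m 2 + image_mset (\<lambda>x. x+2) \<mu>"
    "filter_mset (\<lambda>x. t < x) l = B"
    "\<And>s. t < s \<Longrightarrow> size (filter_mset (\<lambda>x. x \<le> s) l) < s"
proof -
  have Bz: "j < t + 2 \<Longrightarrow> count B j = 0" for j using xb by (auto simp: not_in_iff[symmetric])
  have muz: "t < j \<Longrightarrow> count (image_mset (\<lambda>x. x+2) \<mu>) j = 0" for j
  proof (rule ccontr)
    assume "t < j" "count (image_mset (\<lambda>x. x+2) \<mu>) j \<noteq> 0"
    then have "j \<in># image_mset (\<lambda>x. x+2) \<mu>" by (simp add: not_in_iff[symmetric])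
    then show False using yb \<open>t < j\<close> by force
  qed
  show A: "filter_mset (\<lambda>x. x \<le> t) l = replicate_mset m 2 + image_mset (\<lambda>x. x+2) \<mu>"
  proof (rule multiset_eqI)
    fix j
    show "count (filter_mset (\<lambda>x. x \<le> t) l) j = count (replicate_mset m 2 + image_mset (\<lambda>x. x+2) \<mu>) j"
      using Bz[of j] muz[of j] t2 unfolding l by (auto simp del: count_image_mset)
  qed
  show "filter_mset (\<lambda>x. t < x) l = B"
  proof (rule multiset_eqI)
    fix j
    show "count (filter_mset (\<lambda>x. t < x) l) j = count B j"
      using Bz[of j] muz[of j] t2 unfolding l by (auto simp del: count_image_mset)
  qed
  fix s assume ts: "t < s"
  have "filter_mset (\<lambda>x. x \<le> s) l = filter_mset (\<lambda>x. x \<le> t) l + filter_mset (\<lambda>x. x \<le> s) B"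
  proof (rule multiset_eqI)
    fix j
    show "count (filter_mset (\<lambda>x. x \<le> s) l) j = count (filter_mset (\<lambda>x. x \<le> t) l + filter_mset (\<lambda>x. x \<le> s) B) j"
      using Bz[of j] muz[of j] t2 ts unfolding l by (auto simp del: count_image_mset)
  qed
  then have "size (filter_mset (\<lambda>x. x \<le> s) l) = t + size (filter_mset (\<lambda>x. x \<le> s) B)"
    using A mt by simp
  moreover have "size (filter_mset (\<lambda>x. x \<le> s) B) = card (set_mset (filter_mset (\<lambda>x. x \<le> s) B))"
    by (rule size_le1) (use B1 in \<open>auto simp: le_trans\<close>)
  moreover have "set_mset (filter_mset (\<lambda>x. x \<le> s) B) \<subseteq> {t+2..s}" using xb by auto
  then have "card (set_mset (filter_mset (\<lambda>x. x \<le> s) B)) \<le> card {t+2..s}" by (rule card_mono[rotated]) simp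
  ultimately show "size (filter_mset (\<lambda>x. x \<le> s) l) < s" using ts by simp
qed

lemma split_data:
  assumes "split p"
  defines "t \<equiv> R p 1"
  defines "q \<equiv> filter_mset (\<lambda>x. x < t) p"
  shows "f p = filter_mset (\<lambda>x. t < x) p + replicate_mset (t - size (f q)) 2 + image_mset (\<lambda>x. x + 2) (f q)"
    "\<forall>y\<in>#f q. y + 2 \<le> t"
    "\<forall>x\<in>#filter_mset (\<lambda>x. t < x) p. t + 2 \<le> x"
    "\<forall>x. count (filter_mset (\<lambda>x. t < x) p) x \<le> 1"
    "2 \<le> t" "(t - size (f q)) + size (f q) = t" "2 \<le> t - size (f q)"
    "q \<in> G1" "D q = D p - 1" "p = filter_mset (\<lambda>x. t < x) p + replicate_mset 2 t + q"
    "f q \<in> A1"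
proof -
  interpret split p by fact
  have IH: "f q \<in> A1 \<and> R1 (f q) = 2 * D q \<and> sum_mset (f q) = sum_mset q
                 \<and> (\<forall>y\<in>#f q. \<exists>x\<in>#q. y \<le> x)" using main[OF q_G1] unfolding q_def t_def by simp
  show "f p = filter_mset (\<lambda>x. t < x) p + replicate_mset (t - size (f q)) 2 + image_mset (\<lambda>x. x + 2) (f q)"
    unfolding t_def q_def by (rule f_rec)
  show "\<forall>y\<in>#f q. y + 2 \<le> t" using fq_facts IH unfolding t_def q_def by simp
  show "\<forall>x\<in>#filter_mset (\<lambda>x. t < x) p. t + 2 \<le> x" "\<forall>x. count (filter_mset (\<lambda>x. t < x) p) x \<le> 1"
    using B_facts unfolding t_def by auto
  show "2 \<le> t" using t_ge2 unfolding t_def .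
  show "(t - size (f q)) + size (f q) = t" "2 \<le> t - size (f q)" using size_fq unfolding t_def q_def by auto
  show "q \<in> G1" "D q = D p - 1" using q_G1 D_q unfolding t_def q_def by auto
  show "p = filter_mset (\<lambda>x. t < x) p + replicate_mset 2 t + q" unfolding t_def q_def by (rule p_split)
  show "f q \<in> A1" using IH by simp
qed

lemma f_inj: "p1 \<in> G1 \<Longrightarrow> p2 \<in> G1 \<Longrightarrow> f p1 = f p2 \<Longrightarrow> p1 = p2"
proof (induct "D p1" arbitrary: p1 p2)
  case 0
  then have "D p2 = 0" using main[of p1] main[of p2] by simp
  then show ?case using D0_f 0 by metis
next
  case (Suc n)
  have D2: "D p2 = Suc n" using main[of p1] main[of p2] Suc by simp
  have sp1: "split p1" using Suc by unfold_locales auto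
  have sp2: "split p2" using Suc D2 by unfold_locales auto
  define t1 where "t1 = R p1 1"
  define t2 where "t2 = R p2 1"
  define q1 where "q1 = filter_mset (\<lambda>x. x < t1) p1"
  define q2 where "q2 = filter_mset (\<lambda>x. x < t2) p2"
  note d1 = split_data[OF sp1, folded t1_def, folded q1_def]
  note d2 = split_data[OF sp2, folded t2_def, folded q2_def]
  note e1 = cnt_decomp[OF d1(1) d1(2) d1(3) d1(4) d1(5) d1(6)]
  note e2 = cnt_decomp[OF d2(1) d2(2) d2(3) d2(4) d2(5) d2(6)]
  have fe: "f p1 = f p2" by fact
  have s1: "size (filter_mset (\<lambda>x. x \<le> t1) (f p1)) = t1" using e1(1) d1(6) by simp
  have s2: "size (filter_mset (\<lambda>x. x \<le> t2) (f p2)) = t2" using e2(1) d2(6) by simp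
  have tt: "t1 = t2"
  proof (rule ccontr)
    assume "t1 \<noteq> t2"
    then consider "t1 < t2" | "t2 < t1" by linarith
    then show False
    proof cases
      case 1 then show False using e1(3)[of t2] s2 fe by simp
    next
      case 2 then show False using e2(3)[of t1] s1 fe by simp
    qed
  qed
  have BB: "filter_mset (\<lambda>x. t1 < x) p1 = filter_mset (\<lambda>x. t2 < x) p2"
    using e1(2) e2(2) fe tt by simp
  have RR: "replicate_mset (t1 - size (f q1)) 2 + image_mset (\<lambda>x. x + 2) (f q1)
          = replicate_mset (t2 - size (f q2)) 2 + image_mset (\<lambda>x. x + 2) (f q2)"
    using e1(1) e2(1) fe tt by simp
  have z1: "count (f q1) 0 = 0" and z2: "count (f q2) 0 = 0" using A1D(1) d1(11) d2(11) by auto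
  have "count (replicate_mset (t1 - size (f q1)) 2 + image_mset (\<lambda>x. x + 2) (f q1)) 2
      = count (replicate_mset (t2 - size (f q2)) 2 + image_mset (\<lambda>x. x + 2) (f q2)) 2"
    using RR by simp
  then have mm: "t1 - size (f q1) = t2 - size (f q2)"
    unfolding count_union count_shift using z1 z2 by simp
  have "image_mset (\<lambda>x. x + 2) (f q1) = image_mset (\<lambda>x. x + 2) (f q2)"
    using RR mm by simp
  then have ff: "f q1 = f q2"
  proof -
    assume h: "image_mset (\<lambda>x. x + 2) (f q1) = image_mset (\<lambda>x. x + 2) (f q2)"
    show ?thesis
    proof (rule multiset_eqI)
      fix j
      have "count (image_mset (\<lambda>x. x + 2) (f q1)) (j + 2) = count (image_mset (\<lambda>x. x + 2) (f q2)) (j + 2)"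
        using h by simp
      then show "count (f q1) j = count (f q2) j" unfolding count_shift by simp
    qed
  qed
  have "q1 = q2" using Suc(1)[of q1 q2] d1(8,9) d2(8) Suc(2) ff by simp
  then show ?case using d1(10) d2(10) BB tt by metis
qed


lemma bound2:
  assumes G: "p \<in> G1" and x: "x \<in># p"
  shows "x \<in># f p \<or> x \<le> size (f p)"
proof (cases "D p = 0")
  case True then show ?thesis using D0_f[OF G] x by simp
next
  case False
  then have sp: "split p" using G by unfold_locales auto
  note d = split_data[OF sp]
  have "R p 1 \<le> size (f p)" using f_size[OF G] by simp
  moreover have "R p 1 < x \<Longrightarrow> x \<in># f p" using x by (subst d(1)) simp
  ultimately show ?thesis by linarith
qed

lemma assemble:
  fixes B q :: "nat multiset"
  assumes qG: "q \<in> G1" and qb: "\<forall>x\<in>#q. x + 2 \<le> t"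
    and xb: "\<forall>x\<in>#B. t + 2 \<le> x" and B1: "\<forall>x. count B x \<le> 1" and t2: "2 \<le> t"
    and p: "p = B + replicate_mset 2 t + q"
  shows "p \<in> G1" "D p = D q + 1" "R p 1 = t" "filter_mset (\<lambda>x. x < t) p = q"
    "filter_mset (\<lambda>x. t < x) p = B"
proof -
  have Bz: "j < t + 2 \<Longrightarrow> count B j = 0" for j using xb by (auto simp: not_in_iff[symmetric])
  have qz: "t < j + 2 \<Longrightarrow> count q j = 0" for j using qb by (auto simp: not_in_iff[symmetric])
  have cp: "count p j = count B j + (if j = t then 2 else 0) + count q j" for j
    unfolding p by simp
  have q2: "count q j \<le> 2" for j using G1D(3)[OF qG] by simp
  have q01: "count q 0 = 0" "count q 1 = 0" using G1D(1,2)[OF qG] by auto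
  have adj: "count p j + count p (j+1) \<le> 2" if j: "j \<ge> 1" for j
  proof -
    consider "j + 1 < t" | "j + 1 = t" | "j = t" | "t < j" by linarith
    then show ?thesis
    proof cases
      case 1 then show ?thesis using cp[of j] cp[of "j+1"] Bz[of j] Bz[of "j+1"] G1D(4)[OF qG j] by simp
    next
      case 2 then show ?thesis using cp[of j] cp[of "j+1"] Bz[of j] Bz[of "j+1"] qz[of j] qz[of "j+1"] by simp
    next
      case 3 then show ?thesis using cp[of j] cp[of "j+1"] Bz[of j] Bz[of "j+1"] qz[of j] qz[of "j+1"] by simp
    next
      case 4
      have "count p j \<le> 1" using cp[of j] qz[of j] B1 4 by simp
      moreover have "count p (j+1) \<le> 1" using cp[of "j+1"] qz[of "j+1"] B1 4 by simp
      ultimately show ?thesis by linarith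
    qed
  qed
  show pG: "p \<in> G1" unfolding G1_def is_partition_def
    using adj cp[of 0] cp[of 1] Bz[of 0] Bz[of 1] q01 t2 by (auto simp: not_in_iff)
  have dbl: "doubled p = insert t (doubled q)"
  proof -
    have "count p j = 2 \<longleftrightarrow> j = t \<or> count q j = 2" for j
    proof (cases "j = t")
      case True then show ?thesis using cp[of j] Bz[of j] qz[of j] by simp
    next
      case False
      have "count B j = 0 \<or> count q j = 0" using Bz[of j] qz[of j] by linarith
      then show ?thesis using cp[of j] False B1[rule_format, of j] by auto
    qed
    then show ?thesis by (auto simp: doubled_eq)
  qed
  have tq: "t \<notin> doubled q" using qz[of t] by (simp add: doubled_eq)
  show Dp: "D p = D q + 1" unfolding D_def dbl using tq doubled_finite by simp
  have "R p 1 = Max (doubled p)" using Dp by (intro R1_max) simp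
  also have "\<dots> = t"
  proof (rule Max_eqI)
    show "finite (doubled p)" by (rule doubled_finite)
    show "t \<in> doubled p" using dbl by simp
    fix y assume "y \<in> doubled p"
    then have "y = t \<or> count q y = 2" using dbl by (auto simp: doubled_eq)
    moreover have "count q y = 2 \<Longrightarrow> y \<le> t"
    proof (rule ccontr)
      assume "count q y = 2" "\<not> y \<le> t"
      then show False using qz[of y] by simp
    qed
    ultimately show "y \<le> t" by auto
  qed
  finally show "R p 1 = t" .
  show "filter_mset (\<lambda>x. x < t) p = q"
    by (rule multiset_eqI) (use cp Bz qz in auto)
  show "filter_mset (\<lambda>x. t < x) p = B"
    by (rule multiset_eqI) (use cp Bz qz in auto)
qed


lemma cnt_Suc: "size (filter_mset (\<lambda>x. x \<le> Suc s) l) = size (filter_mset (\<lambda>x. x \<le> s) l) + count l (Suc s)"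
proof -
  have "filter_mset (\<lambda>x. x \<le> Suc s) l = filter_mset (\<lambda>x. x \<le> s) l + replicate_mset (count l (Suc s)) (Suc s)"
    by (rule multiset_eqI) (auto simp: le_Suc_eq)
  then show ?thesis by simp
qed

lemma surj_A1: "l \<in> A1 \<Longrightarrow> \<exists>p\<in>G1. f p = l"
proof (induct "size l" arbitrary: l rule: less_induct)
  case less
  have lA: "l \<in> A1" by fact
  note a = A1D[OF lA]
  show ?case
  proof (cases "R1 l = 0")
    case True
    have c1: "count l j \<le> 1" for j
    proof (rule ccontr)
      assume "\<not> count l j \<le> 1"
      then have "count l j \<ge> 2" by simp
      then have "j \<le> R1 l" by (rule R1_ge)
      then show False using True a(1) \<open>count l j \<ge> 2\<close> by simp
    qed
    have lG: "l \<in> G1" unfolding G1_def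
    proof (intro CollectI conjI allI impI)
      show "is_partition l" using lA unfolding A1_def by simp
      show "count l 1 = 0" by (rule a(2))
      fix j :: nat show "count l j + count l (j + 1) \<le> 2" using c1[of j] c1[of "j+1"] by simp
    qed
    have "count l j \<noteq> 2" for j using c1[of j] by linarith
    then have "doubled l = {}" by (simp add: doubled_eq)
    then have "D l = 0" by (simp add: D_def)
    then show ?thesis using D0_f[OF lG] lG by auto
  next
    case False
    define r where "r = R1 l"
    have r0: "r > 0" using False r_def by simp
    have cr: "count l r \<ge> 2" using R1_cnt r0 r_def by simp
    have reven: "even r" using a(3)[of r] cr by fastforce
    have r2: "r \<ge> 2" using r0 reven by presburger
    define c where "c = count l 2"
    have c2: "c \<ge> 2"
    proof (cases "r = 2")
      case True then show ?thesis using cr c_def by simp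
    next
      case False then show ?thesis using a(5)[of 2] r2 r_def c_def by simp
    qed
    define cnt where "cnt = (\<lambda>s. size (filter_mset (\<lambda>x. x \<le> s) l))"
    have cntS: "cnt (Suc s) = cnt s + count l (Suc s)" for s unfolding cnt_def by (rule cnt_Suc)
    have cntk: "2 * k \<le> r \<Longrightarrow> 2 * k \<le> cnt (2 * k)" for k
    proof (induct k)
      case 0 then show ?case by simp
    next
      case (Suc k)
      have ck: "count l (2 * k + 2) \<ge> 2"
      proof (cases "2 * k + 2 = r")
        case True then show ?thesis using cr by simp
      next
        case False then show ?thesis using a(5)[of "2*k+2"] Suc(2) r_def by simp
      qed
      have "cnt (2 * Suc k) = cnt (2 * k) + count l (Suc (2*k)) + count l (2*k+2)"
        using cntS[of "2*k"] cntS[of "Suc (2*k)"] by simp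
      then show ?case using Suc ck by simp
    qed
    have cntr: "r \<le> cnt r" using cntk[of "r div 2"] reven by simp
    have cntle: "cnt s \<le> size l" for s unfolding cnt_def by simp
    define S where "S = {s. r \<le> s \<and> s \<le> cnt s}"
    have Sfin: "finite S" by (rule finite_subset[of _ "{..size l}"]) (use cntle in \<open>auto simp: S_def intro: le_trans\<close>)
    have rS: "r \<in> S" using cntr S_def by simp
    define t where "t = Max S"
    have tS: "t \<in> S" using Sfin rS t_def by (auto intro: Max_in)
    have tS1: "Suc t \<notin> S"
    proof
      assume "Suc t \<in> S"
      then have "Suc t \<le> t" unfolding t_def using Max_ge[OF Sfin] by blast
      then show False by simp
    qed
    have rt: "r \<le> t" and ct: "t \<le> cnt t" using tS S_def by auto
    have "\<not> Suc t \<le> cnt (Suc t)" using tS1 rt S_def by simp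
    then have ctt: "cnt t = t" and cSt: "count l (Suc t) = 0" using ct cntS[of t] by auto
    define B where "B = filter_mset (\<lambda>x. t < x) l"
    define M where "M = filter_mset (\<lambda>x. 2 < x \<and> x \<le> t) l"
    define mu where "mu = image_mset (\<lambda>x. x - 2) M"
    have shmu: "image_mset (\<lambda>x. x + 2) mu = M"
    proof -
      have "image_mset (\<lambda>x. x + 2) mu = image_mset (\<lambda>x. x - 2 + 2) M"
        unfolding mu_def by (simp add: image_mset.compositionality o_def)
      also have "\<dots> = image_mset (\<lambda>x. x) M" by (rule image_mset_cong) (auto simp: M_def)
      finally show ?thesis by simp
    qed
    have t2: "2 \<le> t" using rt r2 by simp
    have ldec: "l = B + replicate_mset c 2 + M"
    proof (rule multiset_eqI)
      fix j
      show "count l j = count (B + replicate_mset c 2 + M) j"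
        using a(1,2) t2 unfolding B_def M_def c_def by (cases "j \<le> 2") (auto simp: le_Suc_eq numeral_2_eq_2 less_Suc_eq)
    qed
    have ltdec: "filter_mset (\<lambda>x. x \<le> t) l = replicate_mset c 2 + M"
    proof (rule multiset_eqI)
      fix j
      show "count (filter_mset (\<lambda>x. x \<le> t) l) j = count (replicate_mset c 2 + M) j"
        using a(1,2) t2 unfolding M_def c_def by (cases "j \<le> 2") (auto simp: le_Suc_eq numeral_2_eq_2 less_Suc_eq)
    qed
    have smu: "size mu + c = t" using ctt ltdec unfolding cnt_def mu_def by simp
    have smul: "size mu < size l" using ldec c2 unfolding mu_def by simp
    have cmu: "count mu j = (if 0 < j \<and> j + 2 \<le> t then count l (j + 2) else 0)" for j
    proof -
      have "count mu j = count (image_mset (\<lambda>x. x + 2) mu) (j + 2)" unfolding count_shift by simp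
      then show ?thesis unfolding shmu M_def by simp
    qed
    have R1mu: "R1 mu = r - 2"
    proof (cases "r = 2")
      case True
      have "count mu j \<le> 1" for j
      proof (rule ccontr)
        assume "\<not> count mu j \<le> 1"
        then have h: "count mu j \<ge> 2" by simp
        then have "0 < j" "count l (j+2) \<ge> 2" using cmu[of j] by (auto split: if_splits)
        then have "j + 2 \<le> r" using R1_ge r_def by metis
        then show False using True \<open>0 < j\<close> by simp
      qed
      then show ?thesis using True R1_0 by simp
    next
      case False
      then have r4: "r \<ge> 4" using r2 reven by presburger
      show ?thesis
      proof (rule R1_eqI)
        have e: "Suc (Suc (r - 2)) = r" using r4 by simp
        show "count mu (r - 2) \<ge> 2" using cmu[of "r-2"] r4 rt cr by (simp add: e)
        fix j assume "count mu j \<ge> 2"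
        then have "count l (j+2) \<ge> 2" using cmu[of j] by (auto split: if_splits)
        then have "j + 2 \<le> r" using R1_ge r_def by metis
        then show "j \<le> r - 2" by simp
      qed
    qed
    have muA: "mu \<in> A1" unfolding A1_def is_partition_def
    proof (intro CollectI conjI allI impI)
      show "0 \<notin># mu" using cmu[of 0] by (simp add: not_in_iff)
      fix j :: nat
      { assume "odd j" then show "count mu j \<le> 1" using cmu[of j] a(3)[of "j+2"] by simp }
      { assume "odd j \<and> j < R1 mu + 2" then show "count mu j = 0"
          using cmu[of j] a(4)[of "j+2"] R1mu r_def r2 by auto }
      { assume "even j \<and> 0 < j \<and> j < R1 mu" then show "count mu j \<ge> 2"
          using cmu[of j] a(5)[of "j+2"] R1mu r_def r2 rt by auto }
    qed
    obtain q where qG: "q \<in> G1" and fq: "f q = mu" using less(1)[OF smul muA] by blast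
    have qb: "\<forall>x\<in>#q. x + 2 \<le> t"
    proof
      fix x assume "x \<in># q"
      then have "x \<in># mu \<or> x \<le> size mu" using bound2[OF qG] fq by metis
      then show "x + 2 \<le> t"
      proof
        assume "x \<in># mu"
        then have "count mu x \<noteq> 0" by (simp add: not_in_iff[symmetric])
        then show ?thesis using cmu[of x] by (auto split: if_splits)
      qed (use smu c2 in simp)
    qed
    have xb: "\<forall>x\<in>#B. t + 2 \<le> x"
    proof
      fix x assume "x \<in># B"
      then have "t < x" "x \<in># l" unfolding B_def by auto
      moreover have "x \<noteq> Suc t" using cSt \<open>x \<in># l\<close> by (auto simp: not_in_iff[symmetric])
      ultimately show "t + 2 \<le> x" by simp
    qed
    have B1: "\<forall>x. count B x \<le> 1"
    proof
      fix x show "count B x \<le> 1"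
      proof (cases "t < x")
        case True
        have "\<not> count l x \<ge> 2"
        proof
          assume "count l x \<ge> 2" then have "x \<le> r" using R1_ge r_def by metis
          then show False using True rt by simp
        qed
        then show ?thesis unfolding B_def by simp
      qed (simp add: B_def)
    qed
    define p where "p = B + replicate_mset 2 t + q"
    note as = assemble[OF qG qb xb B1 t2 p_def]
    have sp: "split p" using as by unfold_locales auto
    note d = split_data[OF sp]
    have "f p = B + replicate_mset c 2 + image_mset (\<lambda>x. x + 2) mu"
    proof -
      have tc: "t - size mu = c" using smu by simp
      show ?thesis using d(1) as fq tc by simp
    qed
    then have "f p = l" using shmu ldec by simp
    then show ?thesis using as by blast
  qed
qed


theorem theorem3:
  shows "bij_betw f G1 A1 \<and> (\<forall>p\<in>G1. sum_mset (f p) = sum_mset p)"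
proof -
  have "inj_on f G1" by (rule inj_onI) (rule f_inj)
  moreover have "f ` G1 = A1"
  proof
    show "f ` G1 \<subseteq> A1" using main by auto
    show "A1 \<subseteq> f ` G1" using surj_A1 by (metis image_eqI subsetI)
  qed
  ultimately show ?thesis using main by (auto simp: bij_betw_def)
qed

end
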